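(* Let $A=\{a_1,a_2,\dots,a_n\}\subseteq\mathbb{Z}_N$ be a $B_t[N;1]$ set. In the group $\mathbb{Z}_N \times \mathbb{Z}_{2t+1}$, let \[S\triangleq \{ (a_i,1) : a_i \in A\}.\] Then $\mathbb{Z}_N \times \mathbb{Z}_{2t+1} \ge \{-1,1\} \diamond_t S$.
   Context: A subset $A\subseteq\mathbb{Z}_N$ is a $B_t[N;1]$ set if the sums of any $t$ (not necessarily distinct) elements of $A$ are all different modulo $N$, i.e., distinct multisets of $t$ elements of $A$ have distinct sums in $\mathbb{Z}_N$. For a finite Abelian group $G$, a finite set $M\subseteq\mathbb{Z}\setminus\{0\}$ and $S=\{s_1,\dots,s_n\}\subseteq G$, we write $G\ge M\diamond_t S$ if the elements $\mathbf{e}\cdot(s_1,\dots,s_n)=\sum_i e_is_i$, over all $\mathbf{e}\in(M\cup\{0\})^n$ with $1\le\mathrm{wt}(\mathbf{e})\le t$, are all distinct and non-zero in $G$ (here $e_is_i$ is the $e_i$-fold group multiple, $\mathrm{wt}$ the Hamming weight). *)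

theory Defs
  imports Main "HOL-Library.Multiset"
begin

text \<open>Z_N is represented by the integers modulo N (canonical representatives 0..N-1).
A B_t[N;1] set: a subset of Z_N such that distinct multisets of t elements
have distinct sums modulo N.\<close>
definition Bt_set :: "int \<Rightarrow> nat \<Rightarrow> int set \<Rightarrow> bool" where
  "Bt_set N t A \<longleftrightarrow> A \<subseteq> {0..<N} \<and>
     (\<forall>M1 M2. set_mset M1 \<subseteq> A \<longrightarrow> set_mset M2 \<subseteq> A \<longrightarrow>
        size M1 = t \<longrightarrow> size M2 = t \<longrightarrow>
        sum_mset M1 mod N = sum_mset M2 mod N \<longrightarrow> M1 = M2)"

definition wt :: "nat \<Rightarrow> (nat \<Rightarrow> int) \<Rightarrow> nat" where
  "wt n e = card {i. i < n \<and> e i \<noteq> 0}"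

definition coeffs :: "nat \<Rightarrow> int set \<Rightarrow> nat \<Rightarrow> (nat \<Rightarrow> int) set" where
  "coeffs n M t = {e. (\<forall>i<n. e i \<in> M \<union> {0}) \<and> (\<forall>i. n \<le> i \<longrightarrow> e i = 0)
                      \<and> 1 \<le> wt n e \<and> wt n e \<le> t}"

text \<open>The element e \<cdot> (s_0,...,s_{n-1}) of the group Z_N \<times> Z_K, with elements
of Z_N \<times> Z_K represented by pairs of integers reduced mod N and mod K.\<close>
definition lincomb :: "int \<Rightarrow> int \<Rightarrow> nat \<Rightarrow> (nat \<Rightarrow> int \<times> int) \<Rightarrow> (nat \<Rightarrow> int) \<Rightarrow> int \<times> int" where
  "lincomb N K n s e = ((\<Sum>i<n. e i * fst (s i)) mod N, (\<Sum>i<n. e i * snd (s i)) mod K)"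

text \<open>Z_N \<times> Z_K \<ge> M \<diamond>_t {s_0,...,s_{n-1}}: all the combinations are distinct and nonzero.\<close>
definition ge_diamond :: "int \<Rightarrow> int \<Rightarrow> int set \<Rightarrow> nat \<Rightarrow> nat \<Rightarrow> (nat \<Rightarrow> int \<times> int) \<Rightarrow> bool" where
  "ge_diamond N K M t n s \<longleftrightarrow>
     inj_on (lincomb N K n s) (coeffs n M t) \<and>
     (\<forall>e\<in>coeffs n M t. lincomb N K n s e \<noteq> (0, 0))"

end

theory Submission
  imports Defs
begin
lemma sum_split:
  fixes e :: "nat \<Rightarrow> int"
  assumes "\<forall>i<n. e i \<in> {-1,0,1}"
  shows "(\<Sum>i<n. e i * f i) = sum f {i\<in>{..<n}. e i = 1} - sum f {i\<in>{..<n}. e i = -1}"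
proof -
  have "(\<Sum>i<n. e i * f i) = (\<Sum>i<n. (if e i = 1 then f i else 0) - (if e i = -1 then f i else 0))"
    using assms by (intro sum.cong) auto
  also have "\<dots> = sum f {i\<in>{..<n}. e i = 1} - sum f {i\<in>{..<n}. e i = -1}"
    by (simp only: sum_subtractf sum.inter_filter[OF finite_lessThan])
  finally show ?thesis .
qed

lemma wt_split:
  fixes e :: "nat \<Rightarrow> int"
  assumes "\<forall>i<n. e i \<in> {-1,0,1}"
  shows "wt n e = card {i\<in>{..<n}. e i = 1} + card {i\<in>{..<n}. e i = -1}"
proof -
  have "{i. i < n \<and> e i \<noteq> 0} = {i\<in>{..<n}. e i = 1} \<union> {i\<in>{..<n}. e i = -1}"
    using assms by auto
  moreover have "card ({i\<in>{..<n}. e i = 1} \<union> {i\<in>{..<n}. e i = -1}) = card {i\<in>{..<n}. e i = 1} + card {i\<in>{..<n}. e i = -1}"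
    by (rule card_Un_disjoint) auto
  ultimately show ?thesis unfolding wt_def by simp
qed
lemma core:
  fixes N K :: int and t n :: nat and a :: "nat \<Rightarrow> int" and e e' :: "nat \<Rightarrow> int"
  assumes N: "N \<ge> 1" and K: "K = 2 * int t + 1" and n: "0 < n"
    and inj: "inj_on a {..<n}"
    and B: "Bt_set N t (a ` {..<n})"
    and ev: "\<forall>i<n. e i \<in> {-1,0,1}" and ev': "\<forall>i<n. e' i \<in> {-1,0,1}"
    and w: "wt n e + wt n e' \<le> 2 * t"
    and eq: "lincomb N K n (\<lambda>i. (a i, 1)) e = lincomb N K n (\<lambda>i. (a i, 1)) e'"
    and i: "i < n"
  shows "e i = e' i"
proof -
  define P where "P = {i\<in>{..<n}. e i = 1}"
  define Q where "Q = {i\<in>{..<n}. e i = -1}"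
  define P' where "P' = {i\<in>{..<n}. e' i = 1}"
  define Q' where "Q' = {i\<in>{..<n}. e' i = -1}"
  have fin: "finite P" "finite Q" "finite P'" "finite Q'"
    unfolding P_def Q_def P'_def Q'_def by auto
  have s1: "(\<Sum>i<n. e i * a i) = sum a P - sum a Q"
    unfolding P_def Q_def by (rule sum_split[OF ev])
  have s1': "(\<Sum>i<n. e' i * a i) = sum a P' - sum a Q'"
    unfolding P'_def Q'_def by (rule sum_split[OF ev'])
  have s2: "(\<Sum>i<n. e i * 1) = int (card P) - int (card Q)"
    unfolding P_def Q_def using sum_split[OF ev, of "\<lambda>_. 1"] by simp
  have s2': "(\<Sum>i<n. e' i * 1) = int (card P') - int (card Q')"
    unfolding P'_def Q'_def using sum_split[OF ev', of "\<lambda>_. 1"] by simp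
  have w1: "wt n e = card P + card Q" unfolding P_def Q_def by (rule wt_split[OF ev])
  have w2: "wt n e' = card P' + card Q'" unfolding P'_def Q'_def by (rule wt_split[OF ev'])
  from eq have eqa: "(sum a P - sum a Q) mod N = (sum a P' - sum a Q') mod N"
    and eqb: "(int (card P) - int (card Q)) mod K = (int (card P') - int (card Q')) mod K"
    unfolding lincomb_def using s1 s1' s2 s2' by auto
  define d where "d = (int (card P) - int (card Q)) - (int (card P') - int (card Q'))"
  have "K dvd d" using eqb unfolding d_def by (simp add: mod_eq_dvd_iff)
  then obtain m where m: "d = K * m" by (rule dvdE)
  have "\<bar>d\<bar> < K" using w w1 w2 K unfolding d_def by linarith
  hence "m = 0" using m K
    by (smt (verit, ccfv_SIG) mult_le_cancel_left1 mult_minus_right)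
  hence cc: "card P + card Q' = card P' + card Q" using m unfolding d_def by simp
  have le: "card P + card Q' \<le> t" using cc w w1 w2 by linarith
  define k where "k = t - (card P + card Q')"
  define X where "X = image_mset a (mset_set P + mset_set Q') + replicate_mset k (a 0)"
  define Y where "Y = image_mset a (mset_set P' + mset_set Q) + replicate_mset k (a 0)"
  have sub: "P \<subseteq> {..<n}" "Q \<subseteq> {..<n}" "P' \<subseteq> {..<n}" "Q' \<subseteq> {..<n}"
    unfolding P_def Q_def P'_def Q'_def by auto
  have "set_mset X \<subseteq> a ` {..<n}" unfolding X_def using sub fin n by auto
  moreover have "set_mset Y \<subseteq> a ` {..<n}" unfolding Y_def using sub fin n by auto
  moreover have "size X = t" unfolding X_def k_def using le fin by simp
  moreover have "size Y = t" unfolding Y_def k_def using le fin cc by simp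
  moreover have "sum_mset X mod N = sum_mset Y mod N"
  proof -
    have sX: "sum_mset X = sum a P + sum a Q' + int k * a 0"
      unfolding X_def using fin by (simp add: sum_unfold_sum_mset)
    have sY: "sum_mset Y = sum a P' + sum a Q + int k * a 0"
      unfolding Y_def using fin by (simp add: sum_unfold_sum_mset)
    have "N dvd (sum a P - sum a Q) - (sum a P' - sum a Q')"
      using eqa by (simp add: mod_eq_dvd_iff)
    hence "N dvd sum_mset X - sum_mset Y" unfolding sX sY
      by (smt (verit))
    thus ?thesis by (simp add: mod_eq_dvd_iff)
  qed
  ultimately have "X = Y" using B unfolding Bt_set_def by blast
  hence im: "image_mset a (mset_set P + mset_set Q') = image_mset a (mset_set P' + mset_set Q)"
    unfolding X_def Y_def by simp
  define g where "g = inv_into {..<n} a"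
  have gid: "\<And>M. set_mset M \<subseteq> {..<n} \<Longrightarrow> image_mset g (image_mset a M) = M"
  proof -
    fix M :: "nat multiset" assume "set_mset M \<subseteq> {..<n}"
    hence "image_mset (g \<circ> a) M = image_mset id M"
      by (intro image_mset_cong) (auto simp: g_def inv_into_f_f[OF inj])
    thus "image_mset g (image_mset a M) = M" by (simp add: image_mset.compositionality)
  qed
  have "mset_set P + mset_set Q' = mset_set P' + mset_set Q"
  proof -
    have "mset_set P + mset_set Q' = image_mset g (image_mset a (mset_set P + mset_set Q'))"
      using sub fin by (intro gid[symmetric]) auto
    also have "\<dots> = image_mset g (image_mset a (mset_set P' + mset_set Q))"
      by (simp only: im)
    also have "\<dots> = mset_set P' + mset_set Q"
      using sub fin by (intro gid) auto
    finally show ?thesis .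
  qed
  hence "count (mset_set P + mset_set Q') i = count (mset_set P' + mset_set Q) i" by simp
  hence "(if i \<in> P then 1 else 0) + (if i \<in> Q' then 1 else (0::nat)) =
         (if i \<in> P' then 1 else 0) + (if i \<in> Q then 1 else 0)"
    using fin by (simp add: count_mset_set')
  moreover have "e i \<in> {-1,0,1}" "e' i \<in> {-1,0,1}" using ev ev' i by auto
  ultimately show ?thesis using i unfolding P_def Q_def P'_def Q'_def
    by (auto split: if_splits)
qed


theorem theorem9:
  fixes N :: int and t n :: nat and a :: "nat \<Rightarrow> int"
  assumes "N \<ge> 1"
    and "inj_on a {..<n}"
    and "Bt_set N t (a ` {..<n})"
  shows "ge_diamond N (2 * int t + 1) {-1, 1} t n (\<lambda>i. (a i, 1))"
proof -
  have n: "0 < n" if "e \<in> coeffs n {-1,1} t" for e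
  proof (rule ccontr)
    assume "\<not> 0 < n" hence "wt n e = 0" unfolding wt_def by simp
    thus False using that unfolding coeffs_def by simp
  qed
  have C: "e = e'" if "e \<in> coeffs n {-1,1} t" "\<forall>i<n. e' i \<in> {-1,0,1}"
    "\<forall>i. n \<le> i \<longrightarrow> e' i = 0" "wt n e' \<le> t"
    "lincomb N (2 * int t + 1) n (\<lambda>i. (a i, 1)) e = lincomb N (2 * int t + 1) n (\<lambda>i. (a i, 1)) e'"
    for e e'
  proof
    fix i
    show "e i = e' i"
    proof (cases "i < n")
      case True
      show ?thesis
        by (rule core[OF assms(1) refl n[OF that(1)] assms(2) assms(3) _ that(2) _ that(5) True])
          (use that in \<open>auto simp: coeffs_def\<close>)
    next
      case False thus ?thesis using that unfolding coeffs_def by auto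
    qed
  qed
  show ?thesis unfolding ge_diamond_def
  proof
    show "inj_on (lincomb N (2 * int t + 1) n (\<lambda>i. (a i, 1))) (coeffs n {-1, 1} t)"
      by (rule inj_onI, rule C) (auto simp: coeffs_def)
  next
    show "\<forall>e\<in>coeffs n {-1, 1} t. lincomb N (2 * int t + 1) n (\<lambda>i. (a i, 1)) e \<noteq> (0, 0)"
    proof
      fix e assume e: "e \<in> coeffs n {-1, 1} t"
      show "lincomb N (2 * int t + 1) n (\<lambda>i. (a i, 1)) e \<noteq> (0, 0)"
      proof
        assume z: "lincomb N (2 * int t + 1) n (\<lambda>i. (a i, 1)) e = (0, 0)"
        have "lincomb N (2 * int t + 1) n (\<lambda>i. (a i, 1)) (\<lambda>_. 0) = (0, 0)"
          by (simp add: lincomb_def)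
        hence "e = (\<lambda>_. 0)" using z by (intro C[OF e]) (auto simp: wt_def)
        hence "wt n e = 0" by (simp add: wt_def)
        thus False using e by (simp add: coeffs_def)
      qed
    qed
  qed
qed

end
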